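(* Let $n\ge 1$ and, for a real symmetric $n\times n$ matrix $X$ with eigenvalues $\lambda_1(X)\le\cdots\le\lambda_n(X)$, set $F(X):=\sum_{i=1}^n\arctan(\lambda_i(X))$. For each $k\in\{0,1,\dots,n\}$ define $v_k\in C(\mathbb{R}^n)$ by \[v_k(x):=\frac14-\sum_{i=1}^{k}|x_i|+\sum_{i=k+1}^{n}\frac12|x_i|^{3/2},\] define $u_k(x):=-v_{n-k}(Jx)$, where $J$ is the $n\times n$ exchange matrix (the permutation matrix with ones on the anti-diagonal, so $(Jx)_i=x_{n+1-i}$), and let $f_k\in C(\mathbb{R}^n)$ be the continuous extension to all of $\mathbb{R}^n$ of \[f_k(x):=-\sum_{i=1}^{k}\arctan\!\Big(\tfrac38|x_i|^{-1/2}\Big)+\sum_{i=k+1}^{n}\arctan\!\Big(\tfrac38|x_i|^{-1/2}\Big),\qquad x_i\neq0 \text{ for all } i\] (so that $f_k(0)=(n-2k)\frac{\pi}{2}$). Then $v_k$ is a viscosity subsolution and $u_k$ is a viscosity supersolution of the equation \[\sum_{i=1}^n\arctan\big(\lambda_i(D^2 w)\big)=f_k(x)\qquad\text{in }\mathbb{R}^n.\]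
   Context: $D^2 w$ denotes the Hessian matrix of $w$. For continuous $f$ and continuous $w$ on an open set $\Omega\subseteq\mathbb{R}^n$: $w$ is a viscosity subsolution of $F(D^2w)=f(x)$ in $\Omega$ if for every $x^*\in\Omega$ and every $C^2$ function $\phi$ with $\phi\ge w$ near $x^*$ and $\phi(x^* )=w(x^* )$ one has $F(D^2\phi(x^* ))\ge f(x^* )$; $w$ is a viscosity supersolution if for every $x^*\in\Omega$ and every $C^2$ function $\psi$ with $\psi\le w$ near $x^*$ and $\psi(x^* )=w(x^* )$ one has $F(D^2\psi(x^* ))\le f(x^* )$. *)

theory Defs
  imports "HOL-Analysis.Analysis" "HOL-Computational_Algebra.Polynomial"
    "HOL-Library.Multiset"
begin

text \<open>Coordinates of real^'n are indexed by a finite well-ordered type 'n of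
  cardinality n; idx i in {0..n-1} is the position of i (so coordinate x_(idx i + 1)
  of the paper is x $ i).\<close>

definition idx :: "'n::{finite,wellorder} \<Rightarrow> nat" where
  "idx i = card {j. j < i}"

text \<open>Characteristic polynomial det(tI - X) and the eigenvalues of X listed
  increasingly with multiplicity; the i-th eigenvalue (paper: lambda_(i+1)) is
  eigs X ! i.\<close>

definition charpoly :: "real^'n^'n \<Rightarrow> real poly" where
  "charpoly X = det (\<chi> i j. (if i = j then [:0, 1:] else 0) - [:X $ i $ j:])"

definition eigs :: "real^'n^'n \<Rightarrow> real list" where
  "eigs X = sorted_list_of_multiset (proots (charpoly X))"

definition Farctan :: "real^'n^'n \<Rightarrow> real" where
  "Farctan X = (\<Sum>i<CARD('n). arctan (eigs X ! i))"

definition C2_with_hessian :: "(real^'n \<Rightarrow> real) \<Rightarrow> (real^'n \<Rightarrow> real^'n^'n) \<Rightarrow> bool" where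
  "C2_with_hessian \<phi> H \<longleftrightarrow> (\<exists>g. (\<forall>x. (\<phi> has_derivative (\<lambda>h. g x \<bullet> h)) (at x)) \<and>
      (\<forall>x. (g has_derivative (\<lambda>h. H x *v h)) (at x)) \<and> continuous_on UNIV H)"

definition viscosity_subsolution ::
  "(real^'n^'n \<Rightarrow> real) \<Rightarrow> (real^'n \<Rightarrow> real) \<Rightarrow> (real^'n) set \<Rightarrow> (real^'n \<Rightarrow> real) \<Rightarrow> bool" where
  "viscosity_subsolution F f \<Omega> w \<longleftrightarrow>
     (\<forall>x\<in>\<Omega>. \<forall>\<phi> H. C2_with_hessian \<phi> H \<and> eventually (\<lambda>y. \<phi> y \<ge> w y) (nhds x)
        \<and> \<phi> x = w x \<longrightarrow> F (H x) \<ge> f x)"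

definition viscosity_supersolution ::
  "(real^'n^'n \<Rightarrow> real) \<Rightarrow> (real^'n \<Rightarrow> real) \<Rightarrow> (real^'n) set \<Rightarrow> (real^'n \<Rightarrow> real) \<Rightarrow> bool" where
  "viscosity_supersolution F f \<Omega> w \<longleftrightarrow>
     (\<forall>x\<in>\<Omega>. \<forall>\<psi> H. C2_with_hessian \<psi> H \<and> eventually (\<lambda>y. \<psi> y \<le> w y) (nhds x)
        \<and> \<psi> x = w x \<longrightarrow> F (H x) \<le> f x)"

definition vfun :: "nat \<Rightarrow> real^'n::{finite,wellorder} \<Rightarrow> real" where
  "vfun k x = 1/4 - (\<Sum>i\<in>{i. idx i < k}. \<bar>x $ i\<bar>)
              + (\<Sum>i\<in>{i. k \<le> idx i}. (1/2) * \<bar>x $ i\<bar> powr (3/2))"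

definition exchange :: "((real, 'n::{finite,wellorder}) vec, 'n) vec" where
  "exchange = (\<chi> i j. if idx i + idx j = card (UNIV :: 'n set) - 1 then 1 else 0)"

definition ufun :: "nat \<Rightarrow> real^'n::{finite,wellorder} \<Rightarrow> real" where
  "ufun k x = - vfun (card (UNIV :: 'n set) - k) (exchange *v x)"

end

theory Submission
  imports Defs "HOL-Real_Asymp.Real_Asymp"
begin

definition symm :: "real^'n^'n \<Rightarrow> bool" where
  "symm M \<longleftrightarrow> transpose M = M"

lemma symm_inner: assumes "symm M" shows "(M *v x) \<bullet> y = x \<bullet> (M *v y)"
proof -
  have "(M *v x) \<bullet> y = (x v* transpose M) \<bullet> y"
    by (metis transpose_matrix_vector transpose_transpose)
  also have "\<dots> = x \<bullet> (M *v y)" using assms unfolding symm_def by (simp add: dot_lmul_matrix)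
  finally show ?thesis .
qed

definition eigset :: "real^'n^'n \<Rightarrow> (real^'n) set \<Rightarrow> bool" where
  "eigset M E \<longleftrightarrow> pairwise orthogonal E \<and> (\<forall>u\<in>E. norm u = 1 \<and> (\<exists>l. M *v u = l *\<^sub>R u))"

lemma eigset_indep: "eigset M E \<Longrightarrow> independent E"
  unfolding eigset_def by (metis norm_zero pairwise_orthogonal_independent zero_neq_one)

lemma eigset_card: fixes M :: "real^'n^'n" shows "eigset M E \<Longrightarrow> finite E \<and> card E \<le> CARD('n)"
  using eigset_indep[of M E] independent_bound[of E] by simp

lemma quad_arith:
  fixes Q N m t a b c d ww :: real
  assumes "Q = m + 2*t*a + t^2*c" "N = 1 + 2*t*b + t^2*d" "ww = a - m*b" "Q \<le> m*N"
  shows "2*t*ww + t^2*(c - m*d) \<le> 0"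
proof -
  have "2*t*ww + t^2*(c - m*d) = Q - m*N" by (simp add: assms algebra_simps)
  thus ?thesis using assms(4) by linarith
qed

lemma exists_eigvec:
  fixes M :: "real^'n^'n"
  assumes sy: "symm M" and sub: "subspace V" and inv: "\<And>x. x \<in> V \<Longrightarrow> M *v x \<in> V"
    and ne: "V \<noteq> {0}"
  shows "\<exists>u\<in>V. norm u = 1 \<and> M *v u = (u \<bullet> (M *v u)) *\<^sub>R u"
proof -
  let ?S = "V \<inter> sphere 0 1"
  have "compact ?S" by (simp add: closed_subspace closed_Int_compact sub)
  obtain v where v: "v \<in> V" "v \<noteq> 0" using ne sub subspace_0 by blast
  have "v /\<^sub>R norm v \<in> ?S" using v sub by (simp add: subspace_scale)
  hence Sne: "?S \<noteq> {}" by blast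
  have cont: "continuous_on ?S (\<lambda>y. y \<bullet> (M *v y))"
    by (intro continuous_on_inner continuous_on_id matrix_vector_mult_linear_continuous_on)
  obtain u where u: "u \<in> ?S" and umax: "\<And>y. y \<in> ?S \<Longrightarrow> y \<bullet> (M *v y) \<le> u \<bullet> (M *v u)"
    using continuous_attains_sup[OF \<open>compact ?S\<close> Sne cont] by blast
  define m where "m = u \<bullet> (M *v u)"
  have uV: "u \<in> V" and un: "norm u = 1" using u by auto
  have Q: "y \<bullet> (M *v y) \<le> m * (y \<bullet> y)" if "y \<in> V" for y
  proof (cases "y = 0")
    case True then show ?thesis by simp
  next
    case False
    have "y /\<^sub>R norm y \<in> ?S" using that False sub by (simp add: subspace_scale)
    from umax[OF this] have "(y /\<^sub>R norm y) \<bullet> (M *v (y /\<^sub>R norm y)) \<le> m" by (simp add: m_def)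
    hence "(y \<bullet> (M *v y)) / (norm y)^2 \<le> m"
      by (simp add: matrix_vector_mult_scaleR power2_eq_square divide_inverse mult_ac)
    moreover have "(norm y)^2 > 0" using False by simp
    ultimately show ?thesis by (simp add: divide_le_eq power2_norm_eq_inner)
  qed
  define w where "w = M *v u - m *\<^sub>R u"
  have wV: "w \<in> V" unfolding w_def using inv[OF uV] uV sub by (simp add: subspace_diff subspace_scale)
  have key: "2 * t * (w \<bullet> w) + t^2 * (w \<bullet> (M *v w) - m * (w \<bullet> w)) \<le> 0" for t
  proof -
    have "u + t *\<^sub>R w \<in> V" using uV wV sub by (simp add: subspace_add subspace_scale)
    from Q[OF this] have q1: "(u + t *\<^sub>R w) \<bullet> (M *v (u + t *\<^sub>R w)) \<le> m * ((u + t *\<^sub>R w) \<bullet> (u + t *\<^sub>R w))" .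
    moreover have q2: "(u + t *\<^sub>R w) \<bullet> (M *v (u + t *\<^sub>R w)) = m + 2 * t * (w \<bullet> (M *v u)) + t^2 * (w \<bullet> (M *v w))"
    proof -
      have e1: "M *v (u + t *\<^sub>R w) = M *v u + t *\<^sub>R (M *v w)"
        by (simp add: matrix_vector_right_distrib matrix_vector_mult_scaleR)
      have e2: "u \<bullet> (M *v w) = w \<bullet> (M *v u)" using symm_inner[OF sy, of w u] by (metis inner_commute)
      show ?thesis by (simp add: e1 inner_add_left inner_add_right e2 m_def power2_eq_square algebra_simps)
    qed
    moreover have q3: "(u + t *\<^sub>R w) \<bullet> (u + t *\<^sub>R w) = 1 + 2 * t * (w \<bullet> u) + t^2 * (w \<bullet> w)"
    proof -
      have "u \<bullet> u = 1" using un by (metis norm_eq_1)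
      moreover have "u \<bullet> w = w \<bullet> u" by (rule inner_commute)
      ultimately show ?thesis by (simp add: inner_add_left inner_add_right power2_eq_square algebra_simps)
    qed
    moreover have q4: "w \<bullet> w = w \<bullet> (M *v u) - m * (w \<bullet> u)" by (simp add: w_def inner_diff_right)
    ultimately show ?thesis by (intro quad_arith[OF q2 q3 q4]) (simp only: q1)
  qed
  have "w \<bullet> w = 0"
  proof (rule ccontr)
    assume ne0: "w \<bullet> w \<noteq> 0"
    hence pos: "w \<bullet> w > 0" by (metis inner_gt_zero_iff inner_zero_left)
    define b where "b = \<bar>w \<bullet> (M *v w) - m * (w \<bullet> w)\<bar>"
    define t where "t = (w \<bullet> w) / (b + 1)"
    have bge: "b \<ge> 0" by (simp add: b_def)
    have t: "t > 0" "t * b < w \<bullet> w" using bge pos unfolding t_def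
      by (auto intro!: divide_pos_pos simp: divide_less_eq pos_divide_less_eq)
    have "2 * t * (w \<bullet> w) + t^2 * (w \<bullet> (M *v w) - m * (w \<bullet> w)) \<ge> 2 * t * (w \<bullet> w) - t^2 * b"
    proof -
      have "w \<bullet> (M *v w) - m * (w \<bullet> w) \<ge> - b" unfolding b_def by linarith
      hence "t^2 * (w \<bullet> (M *v w) - m * (w \<bullet> w)) \<ge> t^2 * (-b)" by (rule mult_left_mono) simp
      thus ?thesis by simp
    qed
    moreover have "t^2 * b < t * (w \<bullet> w) * 2"
    proof -
      have "t^2 * b = t * (t * b)" by (simp add: power2_eq_square)
      also have "\<dots> < t * (w \<bullet> w)" using t by simp
      finally have "t^2 * b < t * (w \<bullet> w)" .
      moreover have "t * (w \<bullet> w) > 0" using t pos by simp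
      ultimately show ?thesis by linarith
    qed
    ultimately show False using key[of t] t pos by linarith
  qed
  hence "w = 0" by simp
  thus ?thesis using uV un by (auto simp: w_def m_def)
qed

lemma eigset_extend:
  fixes M :: "real^'n^'n"
  assumes sy: "symm M" and E: "eigset M E" and lt: "card E < CARD('n)"
  shows "\<exists>E'. eigset M E' \<and> card E' = Suc (card E)"
proof -
  have fin: "finite E" using eigset_card[OF E] by simp
  define V where "V = {y. \<forall>x\<in>E. orthogonal x y}"
  have sub: "subspace V" unfolding V_def by (rule subspace_orthogonal_to_vectors)
  have inv: "M *v x \<in> V" if "x \<in> V" for x
  proof -
    have "orthogonal u (M *v x)" if "u \<in> E" for u
    proof -
      obtain l where l: "M *v u = l *\<^sub>R u" using E \<open>u \<in> E\<close> unfolding eigset_def by blast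
      have "u \<bullet> (M *v x) = (M *v u) \<bullet> x" using symm_inner[OF sy, of u x] by simp
      also have "\<dots> = l * (u \<bullet> x)" by (simp add: l)
      also have "\<dots> = 0" using \<open>x \<in> V\<close> \<open>u \<in> E\<close> by (simp add: V_def orthogonal_def)
      finally show ?thesis by (simp add: orthogonal_def)
    qed
    thus ?thesis by (simp add: V_def)
  qed
  have dimlt: "dim E < DIM(real^'n)" using lt dim_eq_card_independent[OF eigset_indep[OF E]] by simp
  obtain x where x: "x \<noteq> 0" "\<And>y. y \<in> span E \<Longrightarrow> orthogonal x y"
    using orthogonal_to_subspace_exists[OF dimlt] by blast
  have "x \<in> V" using x(2) span_base by (auto simp: V_def orthogonal_commute)
  hence ne: "V \<noteq> {0}" using x(1) by blast
  obtain u where u: "u \<in> V" "norm u = 1" "M *v u = (u \<bullet> (M *v u)) *\<^sub>R u"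
    using exists_eigvec[OF sy sub inv ne] by blast
  have uE: "u \<notin> E"
  proof
    assume "u \<in> E"
    hence "orthogonal u u" using u(1) by (simp add: V_def)
    thus False using u(2) by (simp add: orthogonal_def)
  qed
  have "eigset M (insert u E)"
    using E u unfolding eigset_def pairwise_insert V_def
    by (auto simp: orthogonal_commute)
  moreover have "card (insert u E) = Suc (card E)" using fin uE by simp
  ultimately show ?thesis by blast
qed

lemma spectral:
  fixes M :: "real^'n^'n"
  assumes sy: "symm M"
  shows "\<exists>E. eigset M E \<and> card E = CARD('n)"
proof -
  have "\<exists>E. eigset M E \<and> card E = m" if "m \<le> CARD('n)" for m
    using that
  proof (induction m)
    case 0
    have "eigset M {}" by (simp add: eigset_def)
    thus ?case by (intro exI[of _ "{}"]) simp
  next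
    case (Suc m)
    then obtain E where "eigset M E" "card E = m" by auto
    thus ?case using eigset_extend[OF sy, of E] Suc.prems by auto
  qed
  thus ?thesis by simp
qed

lemma poly_det: "poly (det A) t = det (\<chi> i j. poly (A $ i $ j) t)"
  unfolding det_def by (simp add: poly_sum poly_prod)

lemma charpoly_eval: "poly (charpoly M) t = det (\<chi> i j. (if i = j then t else 0) - M $ i $ j)"
proof -
  have "\<And>i j. poly ((if i = j then [:0,1:] else 0) - [:M$i$j:]) t = (if i=j then t else 0) - M$i$j" by simp
  thus ?thesis unfolding charpoly_def poly_det by simp
qed

lemma eigsetD1: "eigset M E \<Longrightarrow> u \<in> E \<Longrightarrow> norm u = 1 \<and> (\<exists>l. M *v u = l *\<^sub>R u)"
  unfolding eigset_def by simp

lemma eigsetD2: "eigset M E \<Longrightarrow> u \<in> E \<Longrightarrow> v \<in> E \<Longrightarrow> u \<noteq> v \<Longrightarrow> u \<bullet> v = 0"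
  unfolding eigset_def pairwise_def orthogonal_def by simp

lemma det_eig:
  fixes M :: "real^'n^'n"
  assumes E: "eigset M E" and cE: "card E = CARD('n)"
  shows "det (\<chi> i j. (if i = j then t else 0) - M $ i $ j) = (\<Prod>u\<in>E. t - u \<bullet> (M *v u))"
proof -
  have fin: "finite E" using eigset_card[OF E] by simp
  have "\<exists>h. bij_betw h (UNIV::'n set) E" by (rule finite_same_card_bij) (use fin cE in auto)
  then obtain \<sigma> where \<sigma>: "bij_betw \<sigma> (UNIV :: 'n set) E" by blast
  define lam where "lam u = u \<bullet> (M *v u)" for u :: "real^'n"
  have eig: "M *v u = lam u *\<^sub>R u" if uE: "u \<in> E" for u
  proof -
    obtain l where l: "M *v u = l *\<^sub>R u" "norm u = 1" using eigsetD1[OF E uE] by blast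
    have "u \<bullet> u = 1" using l(2) by (metis norm_eq_1)
    hence "lam u = l" using l(1) by (simp add: lam_def)
    thus ?thesis using l by simp
  qed
  have orth: "\<sigma> i \<bullet> \<sigma> j = (if i = j then 1 else 0)" for i j
  proof -
    have si: "\<sigma> i \<in> E" "\<sigma> j \<in> E" using \<sigma> by (auto simp: bij_betw_def)
    show ?thesis
    proof (cases "i = j")
      case True
      have "norm (\<sigma> i) = 1" using eigsetD1[OF E si(1)] by blast
      thus ?thesis using True by (metis norm_eq_1)
    next
      case False
      hence "\<sigma> i \<noteq> \<sigma> j" using \<sigma> by (metis bij_betw_def inj_onD UNIV_I)
      thus ?thesis using False eigsetD2[OF E si] by simp
    qed
  qed
  define Q :: "real^'n^'n" where "Q = (\<chi> i j. \<sigma> j $ i)"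
  define A :: "real^'n^'n" where "A = (\<chi> i j. (if i = j then t else 0) - M $ i $ j)"
  define Dg :: "real^'n^'n" where "Dg = (\<chi> i j. if i = j then t - lam (\<sigma> i) else 0)"
  have QQ: "transpose Q ** Q = mat 1"
  proof -
    have "(transpose Q ** Q) $ i $ j = mat 1 $ i $ j" for i j
    proof -
      have "(transpose Q ** Q) $ i $ j = \<sigma> i \<bullet> \<sigma> j"
        by (simp add: matrix_matrix_mult_def transpose_def Q_def inner_vec_def)
      thus ?thesis by (simp add: orth mat_def)
    qed
    thus ?thesis by (simp add: vec_eq_iff)
  qed
  have "det (transpose Q) * det Q = 1" using QQ det_mul[of "transpose Q" Q] by simp
  hence dQ: "det Q \<noteq> 0" by auto
  have AQ: "A ** Q = Q ** Dg"
  proof -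
    have "(A ** Q) $ i $ j = (Q ** Dg) $ i $ j" for i j
    proof -
      have "(A ** Q) $ i $ j = t * \<sigma> j $ i - (M *v \<sigma> j) $ i"
      proof -
        have "(A ** Q) $ i $ j = (\<Sum>k\<in>UNIV. ((if i = k then t else 0) - M $ i $ k) * \<sigma> j $ k)"
          by (simp add: matrix_matrix_mult_def A_def Q_def)
        also have "\<dots> = (\<Sum>k\<in>UNIV. (if i = k then t * \<sigma> j $ k else 0)) - (\<Sum>k\<in>UNIV. M $ i $ k * \<sigma> j $ k)"
          unfolding sum_subtractf[symmetric] by (rule sum.cong) (auto simp: left_diff_distrib)
        also have "\<dots> = t * \<sigma> j $ i - (M *v \<sigma> j) $ i"
          by (simp add: matrix_vector_mult_def)
        finally show ?thesis .
      qed
      also have "\<dots> = (t - lam (\<sigma> j)) * \<sigma> j $ i"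
        using eig[of "\<sigma> j"] \<sigma> by (auto simp: bij_betw_def algebra_simps)
      also have "\<dots> = (Q ** Dg) $ i $ j"
        by (simp add: matrix_matrix_mult_def Dg_def Q_def if_distrib mult.commute cong: if_cong)
      finally show ?thesis .
    qed
    thus ?thesis by (simp add: vec_eq_iff)
  qed
  have "det A * det Q = det Q * det Dg" using AQ det_mul[of A Q] det_mul[of Q Dg] by metis
  hence "det A = det Dg" using dQ by (simp add: mult.commute)
  also have "det Dg = (\<Prod>i\<in>UNIV. t - lam (\<sigma> i))"
    by (subst det_diagonal) (auto simp: Dg_def)
  also have "\<dots> = (\<Prod>u\<in>E. t - lam u)"
    using prod.reindex_bij_betw[OF \<sigma>, of "\<lambda>u. t - lam u"] by simp
  finally show ?thesis by (simp add: A_def lam_def)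
qed

lemma charpoly_eig:
  fixes M :: "real^'n^'n"
  assumes E: "eigset M E" and cE: "card E = CARD('n)"
  shows "charpoly M = (\<Prod>u\<in>E. [:- (u \<bullet> (M *v u)), 1:])"
proof -
  have "poly (charpoly M) = poly (\<Prod>u\<in>E. [:- (u \<bullet> (M *v u)), 1:])"
    by (rule ext) (simp add: charpoly_eval det_eig[OF E cE] poly_prod)
  thus ?thesis by (simp add: poly_eq_poly_eq_iff)
qed

lemma Farctan_eig:
  fixes M :: "real^'n^'n"
  assumes E: "eigset M E" and cE: "card E = CARD('n)"
  shows "Farctan M = (\<Sum>u\<in>E. arctan (u \<bullet> (M *v u)))"
proof -
  have fin: "finite E" using eigset_card[OF E] by simp
  define L where "L = (\<Sum>u\<in>E. {# u \<bullet> (M *v u) #})"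
  have pr: "proots (charpoly M) = L"
    unfolding charpoly_eig[OF E cE] L_def by (subst proots_prod) auto
  have "size L = card E" unfolding L_def using fin by (induction E rule: finite_induct) auto
  hence sz: "size L = CARD('n)" using cE by simp
  have len: "length (sorted_list_of_multiset L) = CARD('n)"
    by (metis size_mset mset_sorted_list_of_multiset sz)
  have "Farctan M = sum_list (map arctan (eigs M))"
    unfolding Farctan_def sum_list_sum_nth eigs_def pr
    by (simp add: sz atLeast0LessThan len)
  also have "\<dots> = sum_mset (image_mset arctan L)"
    by (metis eigs_def mset_map mset_sorted_list_of_multiset pr sum_mset_sum_list)
  also have "\<dots> = (\<Sum>u\<in>E. arctan (u \<bullet> (M *v u)))"
    unfolding L_def using fin by (induction E rule: finite_induct) auto
  finally show ?thesis .
qed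

lemma eigset_subset: "eigset M E \<Longrightarrow> E' \<subseteq> E \<Longrightarrow> eigset M E'"
  unfolding eigset_def pairwise_def by blast

lemma inner_eig_expand:
  fixes M :: "real^'n^'n"
  assumes E: "eigset M E" and v: "v \<in> E" and fin: "finite E"
  shows "(\<Sum>u\<in>E. a u *\<^sub>R u) \<bullet> v = a v"
proof -
  have "(\<Sum>u\<in>E. a u *\<^sub>R u) \<bullet> v = (\<Sum>u\<in>E. a u * (u \<bullet> v))" by (simp add: inner_sum_left)
  also have "\<dots> = (\<Sum>u\<in>E. if u = v then a v else 0)"
  proof (rule sum.cong)
    fix u assume u: "u \<in> E"
    show "a u * (u \<bullet> v) = (if u = v then a v else 0)"
    proof (cases "u = v")
      case True
      have "norm v = 1" using eigsetD1[OF E v] by blast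
      hence "v \<bullet> v = 1" by (metis norm_eq_1)
      thus ?thesis using True by simp
    qed (simp add: eigsetD2[OF E u v])
  qed simp
  also have "\<dots> = a v" using fin v by simp
  finally show ?thesis .
qed

lemma count_eig:
  fixes H :: "real^'n^'n" and S :: "'n set" and d :: "'n \<Rightarrow> real"
  assumes E: "eigset H E" and cE: "card E = CARD('n)"
    and quad: "\<And>h. (\<forall>i\<in>S. h $ i = 0) \<Longrightarrow> h \<bullet> (H *v h) \<ge> (\<Sum>i\<in>-S. d i * (h $ i)^2)"
  shows "card {i. i \<notin> S \<and> d i \<ge> c} \<le> card {u\<in>E. u \<bullet> (H *v u) \<ge> c}"
proof (rule ccontr)
  assume "\<not> ?thesis"
  hence lt: "card {u\<in>E. u \<bullet> (H *v u) \<ge> c} < card {i. i \<notin> S \<and> d i \<ge> c}" by simp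
  have fin: "finite E" using eigset_card[OF E] by simp
  define lam where "lam u = u \<bullet> (H *v u)" for u
  define J where "J = {i. i \<notin> S \<and> d i \<ge> c}"
  define E1 where "E1 = {u\<in>E. lam u < c}"
  define B where "B = (\<lambda>j. axis j (1::real)) ` J"
  define U where "U = span E1"
  define W where "W = span B"
  have E1: "eigset H E1" using eigset_subset[OF E] by (auto simp: E1_def)
  have finE1: "finite E1" using fin by (simp add: E1_def)
  have "card E = card E1 + card {u\<in>E. lam u \<ge> c}"
  proof -
    have "E = E1 \<union> {u\<in>E. lam u \<ge> c}" by (auto simp: E1_def)
    moreover have "E1 \<inter> {u\<in>E. lam u \<ge> c} = {}" by (auto simp: E1_def)
    ultimately show ?thesis using fin by (metis (no_types, lifting) card_Un_disjoint finite_Un)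
  qed
  hence cE1: "card E1 + card J > CARD('n)" using lt cE by (simp add: J_def lam_def)
  have dU: "dim U = card E1" unfolding U_def using eigset_indep[OF E1] by (simp add: dim_eq_card_independent)
  have indB: "independent B"
    by (rule pairwise_orthogonal_independent) (auto simp: B_def pairwise_def orthogonal_def inner_axis_axis axis_eq_axis)
  have cB: "card B = card J" unfolding B_def by (rule card_image) (auto simp: inj_on_def axis_eq_axis)
  have dW: "dim W = card J" unfolding W_def using indB cB by (simp add: dim_eq_card_independent)
  have "dim {x + y |x y. x \<in> U \<and> y \<in> W} + dim (U \<inter> W) = dim U + dim W"
    by (rule dim_sums_Int) (simp_all add: U_def W_def)
  moreover have "dim {x + y |x y. x \<in> U \<and> y \<in> W} \<le> CARD('n)" by (rule dim_subset_UNIV_cart)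
  ultimately have "dim (U \<inter> W) > 0" using dU dW cE1 by linarith
  hence "\<not> (U \<inter> W \<subseteq> {0})" using dim_eq_0 by (metis neq0_conv)
  then obtain h where hU: "h \<in> U" and hW: "h \<in> W" and h0: "h \<noteq> 0" by blast
  have Wsub: "W \<subseteq> {x. \<forall>i. i \<notin> J \<longrightarrow> x $ i = 0}"
    unfolding W_def
  proof (rule span_minimal)
    show "B \<subseteq> {x. \<forall>i. i \<notin> J \<longrightarrow> x $ i = 0}" by (auto simp: B_def axis_def)
    show "subspace {x. \<forall>i. i \<notin> J \<longrightarrow> (x::real^'n) $ i = 0}" by (auto simp: subspace_def)
  qed
  hence hJ: "\<And>i. i \<notin> J \<Longrightarrow> h $ i = 0" using hW by blast
  have hS: "\<forall>i\<in>S. h $ i = 0" using hJ by (auto simp: J_def)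
  have "h \<bullet> (H *v h) \<ge> (\<Sum>i\<in>-S. d i * (h $ i)^2)" using quad hS by blast
  moreover have "(\<Sum>i\<in>-S. d i * (h $ i)^2) \<ge> (\<Sum>i\<in>-S. c * (h $ i)^2)"
  proof (rule sum_mono)
    fix i assume "i \<in> -S"
    show "c * (h $ i)^2 \<le> d i * (h $ i)^2"
    proof (cases "i \<in> J")
      case True
      thus ?thesis by (intro mult_right_mono) (auto simp: J_def)
    qed (simp add: hJ)
  qed
  moreover have "(\<Sum>i\<in>-S. c * (h $ i)^2) = c * (h \<bullet> h)"
  proof -
    have "(\<Sum>i\<in>-S. c * (h $ i)^2) = (\<Sum>i\<in>UNIV. c * (h $ i)^2)"
      by (rule sum.mono_neutral_left) (use hS in auto)
    also have "\<dots> = c * (h \<bullet> h)" by (simp add: inner_vec_def sum_distrib_left power2_eq_square)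
    finally show ?thesis .
  qed
  ultimately have ge: "h \<bullet> (H *v h) \<ge> c * (h \<bullet> h)" by linarith
  obtain a where ha: "h = (\<Sum>u\<in>E1. a u *\<^sub>R u)" using hU finE1 unfolding U_def span_finite[OF finE1] by blast
  have hv: "h \<bullet> v = a v" if "v \<in> E1" for v unfolding ha by (rule inner_eig_expand[OF E1 that finE1])
  have eigl: "H *v u = lam u *\<^sub>R u" if uE1: "u \<in> E1" for u
  proof -
    obtain l where l: "H *v u = l *\<^sub>R u" "norm u = 1" using eigsetD1[OF E1 uE1] by blast
    have "u \<bullet> u = 1" using l(2) by (metis norm_eq_1)
    hence "lam u = l" using l(1) by (simp add: lam_def)
    thus ?thesis using l by simp
  qed
  have "H *v h = (\<Sum>u\<in>E1. (a u * lam u) *\<^sub>R u)"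
  proof -
    have "H *v h = (\<Sum>u\<in>E1. H *v (a u *\<^sub>R u))" unfolding ha
      by (rule linear_sum[OF matrix_vector_mul_linear])
    also have "\<dots> = (\<Sum>u\<in>E1. (a u * lam u) *\<^sub>R u)"
      by (rule sum.cong) (auto simp: matrix_vector_mult_scaleR eigl)
    finally show ?thesis .
  qed
  hence "h \<bullet> (H *v h) = (\<Sum>u\<in>E1. (a u * lam u) * (h \<bullet> u))" by (simp add: inner_sum_right)
  also have "\<dots> = (\<Sum>u\<in>E1. (a u)^2 * lam u)" by (rule sum.cong) (auto simp: hv power2_eq_square)
  finally have q1: "h \<bullet> (H *v h) = (\<Sum>u\<in>E1. (a u)^2 * lam u)" .
  have "h \<bullet> h = (\<Sum>u\<in>E1. a u * (h \<bullet> u))" unfolding ha[symmetric] by (subst (2) ha) (simp add: inner_sum_right)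
  also have "\<dots> = (\<Sum>u\<in>E1. (a u)^2)" by (rule sum.cong) (auto simp: hv power2_eq_square)
  finally have q2: "h \<bullet> h = (\<Sum>u\<in>E1. (a u)^2)" .
  have "\<exists>u\<in>E1. a u \<noteq> 0" using h0 ha by (metis (no_types, lifting) scale_eq_0_iff sum.neutral)
  then obtain u0 where u0: "u0 \<in> E1" "a u0 \<noteq> 0" by blast
  have pos: "0 < (\<Sum>u\<in>E1. (a u)^2 * (c - lam u))"
    by (rule sum_pos2[OF finE1 u0(1)]) (use u0 in \<open>auto simp: E1_def\<close>)
  hence "(\<Sum>u\<in>E1. (a u)^2 * lam u) < c * (\<Sum>u\<in>E1. (a u)^2)"
  proof -
    have "(\<Sum>u\<in>E1. (a u)^2 * (c - lam u)) = c * (\<Sum>u\<in>E1. (a u)^2) - (\<Sum>u\<in>E1. (a u)^2 * lam u)"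
      by (simp add: sum_subtractf[symmetric] sum_distrib_left algebra_simps)
    thus ?thesis using pos by linarith
  qed
  thus False using ge unfolding q1 q2 by linarith
qed

lemma sum_mset_lower:
  fixes g :: "real \<Rightarrow> real"
  assumes "\<And>x. g x \<ge> b"
  shows "real (size L) * b \<le> sum_mset (image_mset g L)"
proof (induction L)
  case empty then show ?case by simp
next
  case (add x L)
  then show ?case using assms[of x] by (simp add: algebra_simps)
qed

lemma mset_dom:
  fixes g :: "real \<Rightarrow> real" and M L :: "real multiset"
  assumes mono: "mono g" and lb: "\<And>x. g x \<ge> b"
    and cnt: "\<And>c. size (filter_mset (\<lambda>x. c \<le> x) M) \<le> size (filter_mset (\<lambda>x. c \<le> x) L)"
  shows "sum_mset (image_mset g M) + (real (size L) - real (size M)) * b \<le> sum_mset (image_mset g L)"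
  using cnt
proof (induction M arbitrary: L rule: multiset_induct_max)
  case empty
  then show ?case using sum_mset_lower[OF lb, of L] by simp
next
  case (add mu M0)
  have "size (filter_mset (\<lambda>x. mu \<le> x) (add_mset mu M0)) \<ge> 1" by simp
  hence "size (filter_mset (\<lambda>x. mu \<le> x) L) \<ge> 1" using add.prems[of mu] by linarith
  then obtain la where la: "la \<in># L" "mu \<le> la"
    by (metis (mono_tags, lifting) One_nat_def Suc_le_eq multiset_nonemptyE multiset_partition
        size_eq_0_iff_empty union_iff gr_implies_not0 mem_Collect_eq set_mset_filter)
  define L' where "L' = L - {#la#}"
  have L: "L = add_mset la L'" using la(1) by (simp add: L'_def)
  have cnt': "size (filter_mset (\<lambda>x. c \<le> x) M0) \<le> size (filter_mset (\<lambda>x. c \<le> x) L')" for c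
  proof (cases "c \<le> mu")
    case True
    have "size (filter_mset (\<lambda>x. c \<le> x) (add_mset mu M0)) \<le> size (filter_mset (\<lambda>x. c \<le> x) L)"
      by (rule add.prems)
    thus ?thesis using True la(2) unfolding L by simp
  next
    case False
    have "filter_mset (\<lambda>x. c \<le> x) M0 = {#}" using add.hyps False
      by (auto simp: filter_mset_eq_conv)
    thus ?thesis by (metis le0 size_empty)
  qed
  have IH: "sum_mset (image_mset g M0) + (real (size L') - real (size M0)) * b \<le> sum_mset (image_mset g L')"
    by (rule add.IH[OF cnt'])
  have "g mu \<le> g la" using mono la(2) by (simp add: monoD)
  thus ?case using IH unfolding L by (simp add: algebra_simps)
qed

lemma size_filter_image: "finite A \<Longrightarrow>
  size (filter_mset (\<lambda>x. c \<le> x) (image_mset f (mset_set A))) = card {i\<in>A. c \<le> f i}"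
  by (simp add: filter_mset_image_mset)

lemma Farctan_lower:
  fixes H :: "real^'n^'n" and S :: "'n set" and d :: "'n \<Rightarrow> real"
  assumes sy: "symm H"
    and quad: "\<And>h. (\<forall>i\<in>S. h $ i = 0) \<Longrightarrow> h \<bullet> (H *v h) \<ge> (\<Sum>i\<in>-S. d i * (h $ i)^2)"
  shows "(\<Sum>i\<in>-S. arctan (d i)) - real (card S) * (pi/2) \<le> Farctan H"
proof -
  obtain E where E: "eigset H E" and cE: "card E = CARD('n)" using spectral[OF sy] by blast
  have fin: "finite E" using eigset_card[OF E] by simp
  define lam where "lam u = u \<bullet> (H *v u)" for u
  define L where "L = image_mset lam (mset_set E)"
  define M where "M = image_mset d (mset_set (-S))"
  have cnt: "size (filter_mset (\<lambda>x. c \<le> x) M) \<le> size (filter_mset (\<lambda>x. c \<le> x) L)" for c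
  proof -
    have "size (filter_mset (\<lambda>x. c \<le> x) M) = card {i\<in>-S. c \<le> d i}"
      unfolding M_def by (rule size_filter_image) simp
    also have "\<dots> = card {i. i \<notin> S \<and> d i \<ge> c}" by (rule arg_cong[where f=card]) auto
    also have "\<dots> \<le> card {u\<in>E. u \<bullet> (H *v u) \<ge> c}" by (rule count_eig[OF E cE quad])
    also have "\<dots> = size (filter_mset (\<lambda>x. c \<le> x) L)"
      unfolding L_def using size_filter_image[OF fin, of c lam] by (simp add: lam_def)
    finally show ?thesis .
  qed
  have mono: "mono arctan" by (simp add: mono_def arctan_monotone')
  have lb: "\<And>x. arctan x \<ge> - (pi/2)" using arctan_lbound less_imp_le by blast
  have main: "sum_mset (image_mset arctan M) + (real (size L) - real (size M)) * (- (pi/2))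
      \<le> sum_mset (image_mset arctan L)"
    by (rule mset_dom[OF mono lb cnt])
  have sL: "size L = CARD('n)" using cE by (simp add: L_def)
  have sM: "size M = CARD('n) - card S"
  proof -
    have "-S = UNIV - S" by auto
    thus ?thesis by (simp add: M_def card_Diff_subset)
  qed
  have cS: "card S \<le> CARD('n)" by (simp add: card_mono)
  have "sum_mset (image_mset arctan M) = (\<Sum>i\<in>-S. arctan (d i))"
    by (simp add: M_def sum_unfold_sum_mset image_mset.compositionality o_def)
  moreover have "sum_mset (image_mset arctan L) = Farctan H"
    by (simp add: L_def Farctan_eig[OF E cE] sum_unfold_sum_mset image_mset.compositionality o_def lam_def)
  moreover have "real (size L) - real (size M) = real (card S)" using sL sM cS by simp
  ultimately show ?thesis using main by simp
qed

lemma Hax: "((A::real^'n^'n) *v axis j 1) \<bullet> axis i 1 = A $ i $ j"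
  by (simp add: inner_axis matrix_vector_mult_basis column_def)

lemma line_deriv:
  fixes \<phi> :: "real^'n \<Rightarrow> real"
  assumes "\<And>y. (\<phi> has_derivative (\<lambda>h. g y \<bullet> h)) (at y)"
  shows "((\<lambda>s. \<phi> (p + s *\<^sub>R a)) has_real_derivative (g (p + s *\<^sub>R a) \<bullet> a)) (at s)"
proof -
  have l: "((\<lambda>s. p + s *\<^sub>R a) has_derivative (\<lambda>h. h *\<^sub>R a)) (at s)"
    by (auto intro!: derivative_eq_intros)
  have "((\<lambda>s. \<phi> (p + s *\<^sub>R a)) has_derivative (\<lambda>h. g (p + s *\<^sub>R a) \<bullet> (h *\<^sub>R a))) (at s)"
    by (rule has_derivative_compose[OF l assms])
  thus ?thesis unfolding has_field_derivative_def
    by (rule has_derivative_eq_rhs) (simp add: fun_eq_iff mult.commute)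
qed

lemma line_deriv2:
  fixes g :: "real^'n \<Rightarrow> real^'n"
  assumes "\<And>y. (g has_derivative (\<lambda>h. H y *v h)) (at y)"
  shows "((\<lambda>s. g (p + s *\<^sub>R b) \<bullet> a) has_real_derivative ((H (p + s *\<^sub>R b) *v b) \<bullet> a)) (at s)"
proof -
  have l: "((\<lambda>s. p + s *\<^sub>R b) has_derivative (\<lambda>h. h *\<^sub>R b)) (at s)"
    by (auto intro!: derivative_eq_intros)
  have "((\<lambda>s. g (p + s *\<^sub>R b)) has_derivative (\<lambda>h. H (p + s *\<^sub>R b) *v (h *\<^sub>R b))) (at s)"
    by (rule has_derivative_compose[OF l assms])
  hence "((\<lambda>s. g (p + s *\<^sub>R b) \<bullet> a) has_derivative (\<lambda>h. (H (p + s *\<^sub>R b) *v (h *\<^sub>R b)) \<bullet> a)) (at s)"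
    by (rule has_derivative_inner_left)
  thus ?thesis unfolding has_field_derivative_def
    by (rule has_derivative_eq_rhs) (simp add: fun_eq_iff matrix_vector_mult_scaleR mult.commute)
qed

lemma mixed_diff:
  fixes \<phi> :: "real^'n \<Rightarrow> real"
  assumes d1: "\<And>y. (\<phi> has_derivative (\<lambda>h. g y \<bullet> h)) (at y)"
    and d2: "\<And>y. (g has_derivative (\<lambda>h. H y *v h)) (at y)"
    and t: "t > 0"
  shows "\<exists>y. norm (y - x) \<le> t * (norm a + norm b) \<and>
     \<phi> (x + t *\<^sub>R a + t *\<^sub>R b) - \<phi> (x + t *\<^sub>R a) - \<phi> (x + t *\<^sub>R b) + \<phi> x = t^2 * ((H y *v b) \<bullet> a)"
proof -
  define D where "D s = \<phi> ((x + t *\<^sub>R b) + s *\<^sub>R a) - \<phi> (x + s *\<^sub>R a)" for s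
  have dD: "(D has_real_derivative (g ((x + t *\<^sub>R b) + s *\<^sub>R a) \<bullet> a - g (x + s *\<^sub>R a) \<bullet> a)) (at s)" for s
    unfolding D_def by (intro DERIV_diff line_deriv[OF d1])
  obtain xi where xi: "0 < xi" "xi < t" "D t - D 0 = (t - 0) * (g ((x + t *\<^sub>R b) + xi *\<^sub>R a) \<bullet> a - g (x + xi *\<^sub>R a) \<bullet> a)"
    using MVT2[OF t dD] by blast
  define E where "E s = g ((x + xi *\<^sub>R a) + s *\<^sub>R b) \<bullet> a" for s
  have dE: "(E has_real_derivative ((H ((x + xi *\<^sub>R a) + s *\<^sub>R b) *v b) \<bullet> a)) (at s)" for s
    unfolding E_def by (rule line_deriv2[OF d2])
  obtain eta where eta: "0 < eta" "eta < t" "E t - E 0 = (t - 0) * ((H ((x + xi *\<^sub>R a) + eta *\<^sub>R b) *v b) \<bullet> a)"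
    using MVT2[OF t dE] by blast
  define y where "y = (x + xi *\<^sub>R a) + eta *\<^sub>R b"
  have "norm (y - x) = norm (xi *\<^sub>R a + eta *\<^sub>R b)" by (simp add: y_def)
  also have "\<dots> \<le> xi * norm a + eta * norm b" using xi eta
    by (metis (no_types, opaque_lifting) abs_of_pos norm_scaleR norm_triangle_ineq)
  also have "\<dots> \<le> t * norm a + t * norm b" using xi eta
    by (intro add_mono mult_right_mono) auto
  finally have ny: "norm (y - x) \<le> t * (norm a + norm b)" by (simp add: distrib_left)
  have "\<phi> (x + t *\<^sub>R a + t *\<^sub>R b) - \<phi> (x + t *\<^sub>R a) - \<phi> (x + t *\<^sub>R b) + \<phi> x = D t - D 0"
    by (simp add: D_def algebra_simps)
  also have "\<dots> = t * (E t - E 0)"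
    using xi(3) by (simp add: E_def algebra_simps)
  also have "\<dots> = t^2 * ((H y *v b) \<bullet> a)" using eta(3) by (simp add: y_def power2_eq_square)
  finally show ?thesis using ny by blast
qed

lemma abs_contra: "\<bar>A - X\<bar> < e \<Longrightarrow> \<bar>A - Y\<bar> < e \<Longrightarrow> e = \<bar>X - Y\<bar> / 2 \<Longrightarrow> False"
  for A X Y e :: real
  by (simp add: abs_less_iff abs_if split: if_splits)

lemma hess_symm:
  fixes \<phi> :: "real^'n \<Rightarrow> real"
  assumes d1: "\<And>y. (\<phi> has_derivative (\<lambda>h. g y \<bullet> h)) (at y)"
    and d2: "\<And>y. (g has_derivative (\<lambda>h. H y *v h)) (at y)"
    and cH: "continuous_on UNIV H"
  shows "H x $ i $ j = H x $ j $ i"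
proof (rule ccontr)
  assume ne: "H x $ i $ j \<noteq> H x $ j $ i"
  define e where "e = \<bar>H x $ i $ j - H x $ j $ i\<bar> / 2"
  have e: "e > 0" using ne by (simp add: e_def)
  have c1: "isCont (\<lambda>y. H y $ i $ j) x" "isCont (\<lambda>y. H y $ j $ i) x"
    using cH by (auto intro!: continuous_intros simp: continuous_on_eq_continuous_at)
  obtain d1' where d1': "d1' > 0" "\<And>y. dist y x < d1' \<Longrightarrow> dist (H y $ i $ j) (H x $ i $ j) < e"
    using c1(1) e unfolding isCont_def LIM_def by (metis dist_self dist_commute)
  obtain d2' where d2': "d2' > 0" "\<And>y. dist y x < d2' \<Longrightarrow> dist (H y $ j $ i) (H x $ j $ i) < e"
    using c1(2) e unfolding isCont_def LIM_def by (metis dist_self dist_commute)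
  define t where "t = min d1' d2' / 4"
  have t: "t > 0" "2 * t < d1'" "2 * t < d2'" using d1' d2' by (auto simp: t_def)
  let ?a = "axis i (1::real)" and ?b = "axis j (1::real)"
  obtain y1 where y1: "norm (y1 - x) \<le> t * (norm ?a + norm ?b)"
    "\<phi> (x + t *\<^sub>R ?a + t *\<^sub>R ?b) - \<phi> (x + t *\<^sub>R ?a) - \<phi> (x + t *\<^sub>R ?b) + \<phi> x = t^2 * ((H y1 *v ?b) \<bullet> ?a)"
    using mixed_diff[OF d1 d2 t(1)] by blast
  obtain y2 where y2: "norm (y2 - x) \<le> t * (norm ?b + norm ?a)"
    "\<phi> (x + t *\<^sub>R ?b + t *\<^sub>R ?a) - \<phi> (x + t *\<^sub>R ?b) - \<phi> (x + t *\<^sub>R ?a) + \<phi> x = t^2 * ((H y2 *v ?a) \<bullet> ?b)"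
    using mixed_diff[OF d1 d2 t(1)] by blast
  have "t^2 * ((H y1 *v ?b) \<bullet> ?a) = t^2 * ((H y2 *v ?a) \<bullet> ?b)"
    using y1(2) y2(2) by (simp add: algebra_simps)
  hence "(H y1 *v ?b) \<bullet> ?a = (H y2 *v ?a) \<bullet> ?b" using t by simp
  hence eq: "H y1 $ i $ j = H y2 $ j $ i"
    by (simp add: inner_axis matrix_vector_mult_basis column_def)
  have "dist y1 x < d1'" using y1(1) t by (simp add: dist_norm)
  hence a1: "\<bar>H y1 $ i $ j - H x $ i $ j\<bar> < e" using d1' by (simp add: dist_real_def)
  have "dist y2 x < d2'" using y2(1) t by (simp add: dist_norm)
  hence a2: "\<bar>H y2 $ j $ i - H x $ j $ i\<bar> < e" using d2' by (simp add: dist_real_def)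
  show False using abs_contra[OF a1 a2[folded eq] e_def] .
qed

lemma taylor2:
  fixes q q1 q2 :: "real \<Rightarrow> real"
  assumes dq: "\<And>s. \<bar>s\<bar> < r \<Longrightarrow> (q has_real_derivative q1 s) (at s)"
    and dq1: "\<And>s. \<bar>s\<bar> < r \<Longrightarrow> (q1 has_real_derivative q2 s) (at s)"
    and x: "\<bar>x\<bar> < r" "x \<noteq> 0"
  shows "\<exists>z. \<bar>z\<bar> < \<bar>x\<bar> \<and> q x = q 0 + q1 0 * x + q2 z / 2 * x^2"
proof -
  define diff where "diff m = (if m = 0 then q else if m = 1 then q1 else q2)" for m :: nat
  have D: "\<forall>(m::nat) t. m < 2 \<and> - \<bar>x\<bar> \<le> t \<and> t \<le> \<bar>x\<bar> \<longrightarrow> DERIV (diff m) t :> diff (Suc m) t"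
  proof (intro allI impI)
    fix m :: nat and t :: real assume a: "m < 2 \<and> - \<bar>x\<bar> \<le> t \<and> t \<le> \<bar>x\<bar>"
    hence "\<bar>t\<bar> < r" using x by auto
    thus "DERIV (diff m) t :> diff (Suc m) t" using a dq dq1 by (cases m) (auto simp: diff_def)
  qed
  have "\<exists>z. (if x < 0 then x < z \<and> z < 0 else 0 < z \<and> z < x) \<and>
    q x = (\<Sum>m<2. (diff m 0 / fact m) * (x - 0)^m) + (diff 2 z / fact 2) * (x - 0)^2"
    by (rule Taylor[of 2 diff q "- \<bar>x\<bar>" "\<bar>x\<bar>" 0 x]) (use D x in \<open>simp_all add: diff_def\<close>)
  then obtain z where z: "(if x < 0 then x < z \<and> z < 0 else 0 < z \<and> z < x)"
    "q x = (\<Sum>m<2. (diff m 0 / fact m) * (x - 0)^m) + (diff 2 z / fact 2) * (x - 0)^2" by blast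
  have "\<bar>z\<bar> < \<bar>x\<bar>" using z(1) by (auto split: if_splits)
  moreover have "q x = q 0 + q1 0 * x + q2 z / 2 * x^2" using z(2) by (simp add: diff_def numeral_2_eq_2)
  ultimately show ?thesis by blast
qed

lemma avg_close: "\<bar>a - c\<bar> < e \<Longrightarrow> \<bar>b - c\<bar> < e \<Longrightarrow> \<bar>(a + b) / 2 - c\<bar> < e" for a b c e :: real
  by (simp add: abs_less_iff field_simps) linarith?

lemma second_diff:
  fixes q q1 q2 :: "real \<Rightarrow> real"
  assumes r: "r > 0"
    and dq: "\<And>s. \<bar>s\<bar> < r \<Longrightarrow> (q has_real_derivative q1 s) (at s)"
    and dq1: "\<And>s. \<bar>s\<bar> < r \<Longrightarrow> (q1 has_real_derivative q2 s) (at s)"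
    and c: "isCont q2 0"
  shows "((\<lambda>t. (q t + q (-t) - 2 * q 0) / t^2) \<longlongrightarrow> q2 0) (at_right 0)"
proof (rule tendstoI)
  fix e :: real assume e: "e > 0"
  obtain d where d0: "d > 0" and d1: "\<forall>y. y \<noteq> 0 \<and> norm (y - 0) < d \<longrightarrow> norm (q2 y - q2 0) < e"
    using c e unfolding isCont_def LIM_eq by blast
  have d: "d > 0" "\<And>y. \<bar>y\<bar> < d \<Longrightarrow> \<bar>q2 y - q2 0\<bar> < e"
  proof -
    show "d > 0" by (rule d0)
    fix y :: real assume "\<bar>y\<bar> < d"
    thus "\<bar>q2 y - q2 0\<bar> < e" using d1 e by (cases "y = 0") auto
  qed
  show "\<forall>\<^sub>F t in at_right 0. dist ((q t + q (-t) - 2 * q 0) / t^2) (q2 0) < e"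
    unfolding eventually_at_right_field
  proof (intro exI[of _ "min r d"] conjI allI impI)
    show "min r d > 0" using r d by simp
    fix t :: real assume t: "0 < t" "t < min r d"
    have "\<exists>z. \<bar>z\<bar> < \<bar>t\<bar> \<and> q t = q 0 + q1 0 * t + q2 z / 2 * t^2"
      by (rule taylor2[OF dq dq1]) (use t in auto)
    then obtain z1 where z1: "\<bar>z1\<bar> < \<bar>t\<bar>" "q t = q 0 + q1 0 * t + q2 z1 / 2 * t^2" by blast
    have "\<exists>z. \<bar>z\<bar> < \<bar>-t\<bar> \<and> q (-t) = q 0 + q1 0 * (-t) + q2 z / 2 * (-t)^2"
      by (rule taylor2[OF dq dq1]) (use t in auto)
    then obtain z2 where z2: "\<bar>z2\<bar> < \<bar>-t\<bar>" "q (-t) = q 0 + q1 0 * (-t) + q2 z2 / 2 * (-t)^2" by blast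
    have "(q t + q (-t) - 2 * q 0) / t^2 = (q2 z1 + q2 z2) / 2"
      using z1(2) z2(2) t by (simp add: field_simps power2_eq_square)
    moreover have "\<bar>q2 z1 - q2 0\<bar> < e" "\<bar>q2 z2 - q2 0\<bar> < e" using d(2) z1(1) z2(1) t by auto
    ultimately show "dist ((q t + q (-t) - 2 * q 0) / t^2) (q2 0) < e"
      unfolding dist_real_def by (simp only:) (rule avg_close)
  qed
qed

definition Gc :: "bool \<Rightarrow> real \<Rightarrow> real" where
  "Gc p s = (if p then - \<bar>s\<bar> else (1/2) * \<bar>s\<bar> powr (3/2))"

lemma pos_case:
  fixes y0 k :: real
  assumes y0: "y0 > 0"
  shows "((\<lambda>t. (Gc False (y0 + t * k) + Gc False (y0 - t * k) - 2 * Gc False y0) / t^2)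
          \<longlongrightarrow> (3/8) * y0 powr (-1/2) * k^2) (at_right 0)"
proof -
  define r where "r = y0 / (\<bar>k\<bar> + 1)"
  have r: "r > 0" using y0 by (simp add: r_def)
  have pos: "y0 + s * k > 0" if "\<bar>s\<bar> < r" for s
  proof -
    have "\<bar>s * k\<bar> \<le> \<bar>s\<bar> * (\<bar>k\<bar> + 1)" by (simp add: abs_mult mult_left_mono)
    also have "\<dots> < r * (\<bar>k\<bar> + 1)" using that by (intro mult_strict_right_mono) auto
    also have "\<dots> = y0" by (simp add: r_def)
    finally show ?thesis by linarith
  qed
  define q where "q t = (1/2) * (y0 + t * k) powr (3/2)" for t
  define q1 where "q1 t = (3/4) * k * (y0 + t * k) powr (1/2)" for t
  define q2 where "q2 t = (3/8) * k^2 * (y0 + t * k) powr (-1/2)" for t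
  have dq: "(q has_real_derivative q1 s) (at s)" if "\<bar>s\<bar> < r" for s
  proof -
    have "((\<lambda>t. (y0 + t * k) powr (3/2)) has_real_derivative (3/2) * (y0 + s * k) powr (3/2 - of_nat 1) * k) (at s)"
      by (rule DERIV_fun_powr) (auto intro!: derivative_eq_intros pos[OF that])
    hence "((\<lambda>t. (1/2) * (y0 + t * k) powr (3/2)) has_real_derivative (1/2) * ((3/2) * (y0 + s * k) powr (3/2 - of_nat 1) * k)) (at s)"
      by (rule DERIV_cmult)
    moreover have "q = (\<lambda>t. (1/2) * (y0 + t * k) powr (3/2))" by (simp add: fun_eq_iff q_def)
    moreover have "(1/2) * ((3/2) * (y0 + s * k) powr (3/2 - of_nat 1) * k) = q1 s" by (simp add: q1_def)
    ultimately show ?thesis by simp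
  qed
  have dq1: "(q1 has_real_derivative q2 s) (at s)" if "\<bar>s\<bar> < r" for s
  proof -
    have "((\<lambda>t. (y0 + t * k) powr (1/2)) has_real_derivative (1/2) * (y0 + s * k) powr (1/2 - of_nat 1) * k) (at s)"
      by (rule DERIV_fun_powr) (auto intro!: derivative_eq_intros pos[OF that])
    hence "((\<lambda>t. (3/4) * k * (y0 + t * k) powr (1/2)) has_real_derivative (3/4) * k * ((1/2) * (y0 + s * k) powr (1/2 - of_nat 1) * k)) (at s)"
      by (rule DERIV_cmult)
    moreover have "(3/4) * k * ((1/2) * (y0 + s * k) powr (1/2 - of_nat 1) * k) = q2 s"
      by (simp add: q2_def power2_eq_square)
    moreover have "q1 = (\<lambda>t. (3/4) * k * (y0 + t * k) powr (1/2))" by (simp add: fun_eq_iff q1_def)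
    ultimately show ?thesis by simp
  qed
  have c: "isCont q2 0" unfolding q2_def using y0 by (auto intro!: continuous_intros)
  have lim: "((\<lambda>t. (q t + q (-t) - 2 * q 0) / t^2) \<longlongrightarrow> q2 0) (at_right 0)"
    by (rule second_diff[OF r dq dq1 c])
  have ev: "eventually (\<lambda>t. (q t + q (-t) - 2 * q 0) / t^2 =
      (Gc False (y0 + t * k) + Gc False (y0 - t * k) - 2 * Gc False y0) / t^2) (at_right 0)"
    unfolding eventually_at_right_field
  proof (intro exI[of _ r] conjI allI impI)
    show "r > 0" by (rule r)
    fix t :: real assume t: "0 < t" "t < r"
    have p1: "y0 + t * k > 0" using pos[of t] t by simp
    have p2: "y0 + (-t) * k > 0" using pos[of "-t"] t by simp
    show "(q t + q (-t) - 2 * q 0) / t^2 =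
      (Gc False (y0 + t * k) + Gc False (y0 - t * k) - 2 * Gc False y0) / t^2"
      using p1 p2 y0 by (simp add: q_def Gc_def)
  qed
  have e: "q2 0 = (3/8) * y0 powr (-1/2) * k^2" by (simp add: q2_def)
  show ?thesis using Lim_transform_eventually[OF lim ev] unfolding e .
qed

lemma coord_lim:
  fixes x0 hh :: real
  assumes "x0 \<noteq> 0 \<or> hh = 0"
  shows "((\<lambda>t. (Gc p (x0 + t * hh) + Gc p (x0 - t * hh) - 2 * Gc p x0) / t^2)
          \<longlongrightarrow> (if p then 0 else (3/8) * \<bar>x0\<bar> powr (-1/2)) * hh^2) (at_right 0)"
proof (cases "hh = 0")
  case True
  thus ?thesis by simp
next
  case False
  hence x0: "x0 \<noteq> 0" using assms by simp
  show ?thesis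
  proof (cases p)
    case True
    have ev: "eventually (\<lambda>t. 0 = (Gc p (x0 + t * hh) + Gc p (x0 - t * hh) - 2 * Gc p x0) / t^2) (at_right 0)"
      unfolding eventually_at_right_field
    proof (intro exI[of _ "\<bar>x0\<bar> / (\<bar>hh\<bar> + 1)"] conjI allI impI)
      show "\<bar>x0\<bar> / (\<bar>hh\<bar> + 1) > 0" using x0 by simp
      fix t :: real assume t: "0 < t" "t < \<bar>x0\<bar> / (\<bar>hh\<bar> + 1)"
      have "\<bar>t * hh\<bar> \<le> t * (\<bar>hh\<bar> + 1)" using t by (simp add: abs_mult)
      also have "\<dots> < \<bar>x0\<bar>" using t by (simp add: pos_less_divide_eq)
      finally have th: "\<bar>t * hh\<bar> < \<bar>x0\<bar>" .
      have "\<bar>x0 + t * hh\<bar> + \<bar>x0 - t * hh\<bar> = 2 * \<bar>x0\<bar>"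
        using th by (cases "x0 > 0") (auto simp: abs_if split: if_splits)
      thus "0 = (Gc p (x0 + t * hh) + Gc p (x0 - t * hh) - 2 * Gc p x0) / t^2"
        using True by (simp add: Gc_def)
    qed
    show ?thesis using Lim_transform_eventually[OF tendsto_const ev] True by simp
  next
    case False
    show ?thesis
    proof (cases "x0 > 0")
      case True
      thus ?thesis using pos_case[OF True, of hh] \<open>\<not> p\<close> by simp
    next
      case neg: False
      hence ax: "\<bar>x0\<bar> > 0" "x0 = - \<bar>x0\<bar>" using x0 by auto
      have eq: "(Gc False (\<bar>x0\<bar> + t * (-hh)) + Gc False (\<bar>x0\<bar> - t * (-hh)) - 2 * Gc False \<bar>x0\<bar>) / t^2
          = (Gc p (x0 + t * hh) + Gc p (x0 - t * hh) - 2 * Gc p x0) / t^2" for t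
      proof -
        have "\<bar>\<bar>x0\<bar> + t * (-hh)\<bar> = \<bar>x0 + t * hh\<bar>" "\<bar>\<bar>x0\<bar> - t * (-hh)\<bar> = \<bar>x0 - t * hh\<bar>"
          by (subst ax(2); simp; arith)+
        thus ?thesis using \<open>\<not> p\<close> by (simp add: Gc_def)
      qed
      show ?thesis using pos_case[OF ax(1), of "-hh"] \<open>\<not> p\<close> unfolding eq by simp
    qed
  qed
qed

definition wP :: "('n \<Rightarrow> bool) \<Rightarrow> real^'n \<Rightarrow> real" where
  "wP P y = 1/4 + (\<Sum>j\<in>UNIV. Gc (P j) (y $ j))"

lemma mv_eq: "((M::real^'n^'n) *v h) \<bullet> h = (\<Sum>i\<in>UNIV. (\<Sum>j\<in>UNIV. M $ i $ j * h $ j) * h $ i)"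
  by (simp add: matrix_vector_mult_def inner_vec_def)

lemma q2_cont:
  fixes H :: "real^'n \<Rightarrow> real^'n^'n" assumes "continuous_on UNIV H"
  shows "isCont (\<lambda>s. (H (x + s *\<^sub>R h) *v h) \<bullet> h) s0"
proof -
  have c: "isCont H y" for y using assms by (simp add: continuous_on_eq_continuous_at)
  have c2: "isCont (\<lambda>s. H (x + s *\<^sub>R h)) s0"
    by (rule isCont_o2[OF _ c]) (auto intro!: continuous_intros)
  show ?thesis unfolding mv_eq
    by (intro continuous_intros c2)
qed

lemma rdiff:
  "(wP P (x + t *\<^sub>R h) + wP P (x + (-t) *\<^sub>R h) - 2 * wP P (x + 0 *\<^sub>R h)) / t^2 =
   (\<Sum>j\<in>UNIV. (Gc (P j) (x $ j + t * h $ j) + Gc (P j) (x $ j - t * h $ j) - 2 * Gc (P j) (x $ j)) / t^2)"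
proof -
  have "wP P (x + t *\<^sub>R h) + wP P (x + (-t) *\<^sub>R h) - 2 * wP P (x + 0 *\<^sub>R h) =
    (\<Sum>j\<in>UNIV. Gc (P j) (x $ j + t * h $ j) + Gc (P j) (x $ j - t * h $ j) - 2 * Gc (P j) (x $ j))"
    by (simp add: wP_def sum.distrib sum_subtractf sum_distrib_left)
  thus ?thesis by (simp add: sum_divide_distrib)
qed

lemma arctan_lim_right: "((\<lambda>s::real. arctan ((3/8) * \<bar>s\<bar> powr (-1/2))) \<longlongrightarrow> pi/2) (at_right 0)"
proof -
  have "((\<lambda>s::real. arctan ((3/8) * s powr (-1/2))) \<longlongrightarrow> pi/2) (at_right 0)" by real_asymp
  moreover have "eventually (\<lambda>s::real. arctan ((3/8) * s powr (-1/2)) = arctan ((3/8) * \<bar>s\<bar> powr (-1/2))) (at_right 0)"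
    by (simp add: eventually_at_right_field) (metis zero_less_one)
  ultimately show ?thesis by (rule Lim_transform_eventually)
qed

lemma powr_blowup: "filterlim (\<lambda>t::real. t powr (3/2) / t^2) at_top (at_right 0)"
  by real_asymp

lemma sub_general:
  fixes f :: "real^'n \<Rightarrow> real" and P :: "'n \<Rightarrow> bool"
  assumes cf: "continuous_on UNIV f"
    and fP: "\<And>x. (\<forall>i. x $ i \<noteq> 0) \<Longrightarrow>
           f x = - (\<Sum>i\<in>{i. P i}. arctan ((3/8) * \<bar>x $ i\<bar> powr (-1/2)))
                 + (\<Sum>i\<in>{i. \<not> P i}. arctan ((3/8) * \<bar>x $ i\<bar> powr (-1/2)))"
  shows "viscosity_subsolution Farctan f UNIV (wP P)"
  unfolding viscosity_subsolution_def
proof (intro ballI allI impI)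
  fix x :: "real^'n" and \<phi> H
  assume A: "C2_with_hessian \<phi> H \<and> eventually (\<lambda>y. \<phi> y \<ge> wP P y) (nhds x) \<and> \<phi> x = wP P x"
  obtain g where d1: "\<And>y. (\<phi> has_derivative (\<lambda>h. g y \<bullet> h)) (at y)"
    and d2: "\<And>y. (g has_derivative (\<lambda>h. H y *v h)) (at y)" and cH: "continuous_on UNIV H"
    using A unfolding C2_with_hessian_def by blast
  have evx: "eventually (\<lambda>y. \<phi> y \<ge> wP P y) (nhds x)" and eqx: "\<phi> x = wP P x" using A by auto
  have sy: "symm (H x)"
    unfolding symm_def by (simp add: vec_eq_iff transpose_def hess_symm[OF d1 d2 cH])
  define qd where "qd h t = (\<phi> (x + t *\<^sub>R h) + \<phi> (x + (-t) *\<^sub>R h) - 2 * \<phi> (x + 0 *\<^sub>R h)) / t^2" for h t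
  define rd where "rd h t = (wP P (x + t *\<^sub>R h) + wP P (x + (-t) *\<^sub>R h) - 2 * wP P (x + 0 *\<^sub>R h)) / t^2" for h t
  have qlim: "(qd h \<longlongrightarrow> (H x *v h) \<bullet> h) (at_right 0)" for h
  proof -
    have "((\<lambda>t. ((\<lambda>s. \<phi> (x + s *\<^sub>R h)) t + (\<lambda>s. \<phi> (x + s *\<^sub>R h)) (-t) - 2 * (\<lambda>s. \<phi> (x + s *\<^sub>R h)) 0) / t^2)
       \<longlongrightarrow> (\<lambda>s. (H (x + s *\<^sub>R h) *v h) \<bullet> h) 0) (at_right 0)"
      by (rule second_diff[of 1 _ "\<lambda>s. g (x + s *\<^sub>R h) \<bullet> h"])
         (auto intro: line_deriv[OF d1] line_deriv2[OF d2] q2_cont[OF cH])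
    thus ?thesis by (simp add: qd_def[abs_def])
  qed
  have ev_ge: "eventually (\<lambda>t. rd h t \<le> qd h t) (at_right 0)" for h
  proof -
    have t1: "((\<lambda>t. x + t *\<^sub>R h) \<longlongrightarrow> x) (at_right 0)"
      by (rule tendsto_eq_intros refl)+ simp
    have t2: "((\<lambda>t. x + (-t) *\<^sub>R h) \<longlongrightarrow> x) (at_right 0)"
      by (rule tendsto_eq_intros refl)+ simp
    have e1: "eventually (\<lambda>t. \<phi> (x + t *\<^sub>R h) \<ge> wP P (x + t *\<^sub>R h)) (at_right 0)"
      using t1 evx unfolding filterlim_def le_filter_def eventually_filtermap by blast
    have e2: "eventually (\<lambda>t. \<phi> (x + (-t) *\<^sub>R h) \<ge> wP P (x + (-t) *\<^sub>R h)) (at_right 0)"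
      using t2 evx unfolding filterlim_def le_filter_def eventually_filtermap by blast
    have e3: "eventually (\<lambda>t::real. t > 0) (at_right 0)" by (simp add: eventually_at_right_less)
    show ?thesis using e1 e2 e3
    proof eventually_elim
      case (elim t)
      thus ?case unfolding qd_def rd_def using eqx
        by (intro divide_right_mono) auto
    qed
  qed
  have nz: "x $ j \<noteq> 0" if nP: "\<not> P j" for j
  proof
    assume x0: "x $ j = 0"
    define h :: "real^'n" where "h = axis j 1"
    have rd_eq: "rd h t = t powr (3/2) / t^2" if "t > 0" for t
    proof -
      have "rd h t = (\<Sum>i\<in>UNIV. (Gc (P i) (x $ i + t * h $ i) + Gc (P i) (x $ i - t * h $ i) - 2 * Gc (P i) (x $ i)) / t^2)"
        unfolding rd_def by (rule rdiff)
      also have "\<dots> = (\<Sum>i\<in>UNIV. if i = j then t powr (3/2) / t^2 else 0)"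
      proof (rule sum.cong)
        fix i :: 'n assume "i \<in> UNIV"
        show "(Gc (P i) (x $ i + t * h $ i) + Gc (P i) (x $ i - t * h $ i) - 2 * Gc (P i) (x $ i)) / t^2
          = (if i = j then t powr (3/2) / t^2 else 0)"
          using x0 nP that by (auto simp: h_def axis_def Gc_def)
      qed simp
      also have "\<dots> = t powr (3/2) / t^2" by simp
      finally show ?thesis .
    qed
    have E1: "eventually (\<lambda>t. qd h t < (H x *v h) \<bullet> h + 1) (at_right 0)"
      using order_tendstoD(2)[OF qlim[of h]] by simp
    have E2: "eventually (\<lambda>t. t powr (3/2) / t^2 > (H x *v h) \<bullet> h + 1) (at_right 0)"
      using powr_blowup by (simp add: filterlim_at_top_dense)
    have E3: "eventually (\<lambda>t::real. t > 0) (at_right 0)" by (simp add: eventually_at_right_less)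
    have "eventually (\<lambda>t. False) (at_right (0::real))" using E1 E2 E3 ev_ge[of h]
    proof eventually_elim
      case (elim t)
      thus ?case using rd_eq[of t] by linarith
    qed
    thus False by (simp add: trivial_limit_at_right_real)
  qed
  define S where "S = {j. P j \<and> x $ j = 0}"
  define d where "d j = (if P j then 0 else (3/8) * \<bar>x $ j\<bar> powr (-1/2))" for j
  have quad: "h \<bullet> (H x *v h) \<ge> (\<Sum>i\<in>-S. d i * (h $ i)^2)" if hS: "\<forall>i\<in>S. h $ i = 0" for h
  proof -
    have rlim: "(rd h \<longlongrightarrow> (\<Sum>j\<in>UNIV. d j * (h $ j)^2)) (at_right 0)"
    proof -
      have "((\<lambda>t. \<Sum>j\<in>UNIV. (Gc (P j) (x $ j + t * h $ j) + Gc (P j) (x $ j - t * h $ j) - 2 * Gc (P j) (x $ j)) / t^2)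
          \<longlongrightarrow> (\<Sum>j\<in>UNIV. d j * (h $ j)^2)) (at_right 0)"
      proof (rule tendsto_sum)
        fix j :: 'n assume "j \<in> UNIV"
        have "x $ j \<noteq> 0 \<or> h $ j = 0" using nz hS by (auto simp: S_def)
        from coord_lim[OF this, of "P j"]
        show "((\<lambda>t. (Gc (P j) (x $ j + t * h $ j) + Gc (P j) (x $ j - t * h $ j) - 2 * Gc (P j) (x $ j)) / t^2)
          \<longlongrightarrow> d j * (h $ j)^2) (at_right 0)" by (simp add: d_def)
      qed
      thus ?thesis unfolding rd_def rdiff .
    qed
    have "(\<Sum>j\<in>UNIV. d j * (h $ j)^2) \<le> (H x *v h) \<bullet> h"
      by (rule tendsto_le[OF trivial_limit_at_right_real qlim rlim ev_ge])
    moreover have "(\<Sum>j\<in>UNIV. d j * (h $ j)^2) = (\<Sum>i\<in>-S. d i * (h $ i)^2)"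
      by (rule sum.mono_neutral_right) (use hS in auto)
    ultimately show ?thesis by (simp add: inner_commute)
  qed
  have FL: "(\<Sum>i\<in>-S. arctan (d i)) - real (card S) * (pi/2) \<le> Farctan (H x)"
    by (rule Farctan_lower[OF sy]) (use quad in blast)
  define e :: "real^'n" where "e = (\<chi> j. if x $ j = 0 then 1 else 0)"
  define A where "A j = (if x $ j = 0 then pi/2 else arctan ((3/8) * \<bar>x $ j\<bar> powr (-1/2)))" for j
  have ylim: "((\<lambda>s. x + s *\<^sub>R e) \<longlongrightarrow> x) (at_right 0)"
    by (rule tendsto_eq_intros refl)+ simp
  have flim1: "((\<lambda>s. f (x + s *\<^sub>R e)) \<longlongrightarrow> f x) (at_right 0)"
    by (rule isCont_tendsto_compose[OF _ ylim]) (use cf in \<open>simp add: continuous_on_eq_continuous_at\<close>)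
  have comp: "((\<lambda>s. arctan ((3/8) * \<bar>(x + s *\<^sub>R e) $ j\<bar> powr (-1/2))) \<longlongrightarrow> A j) (at_right 0)" for j
  proof (cases "x $ j = 0")
    case True
    thus ?thesis using arctan_lim_right by (simp add: e_def A_def)
  next
    case False
    thus ?thesis by (simp add: e_def A_def)
  qed
  have flim2: "((\<lambda>s. f (x + s *\<^sub>R e)) \<longlongrightarrow> - (\<Sum>i\<in>{i. P i}. A i) + (\<Sum>i\<in>{i. \<not> P i}. A i)) (at_right 0)"
  proof -
    have "((\<lambda>s. - (\<Sum>i\<in>{i. P i}. arctan ((3/8) * \<bar>(x + s *\<^sub>R e) $ i\<bar> powr (-1/2)))
                 + (\<Sum>i\<in>{i. \<not> P i}. arctan ((3/8) * \<bar>(x + s *\<^sub>R e) $ i\<bar> powr (-1/2))))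
        \<longlongrightarrow> - (\<Sum>i\<in>{i. P i}. A i) + (\<Sum>i\<in>{i. \<not> P i}. A i)) (at_right 0)"
      by (intro tendsto_add tendsto_minus tendsto_sum comp)
    moreover have "eventually (\<lambda>s. - (\<Sum>i\<in>{i. P i}. arctan ((3/8) * \<bar>(x + s *\<^sub>R e) $ i\<bar> powr (-1/2)))
                 + (\<Sum>i\<in>{i. \<not> P i}. arctan ((3/8) * \<bar>(x + s *\<^sub>R e) $ i\<bar> powr (-1/2)))
           = f (x + s *\<^sub>R e)) (at_right 0)"
      unfolding eventually_at_right_field
    proof (intro exI[of _ 1] conjI allI impI)
      fix s :: real assume s: "0 < s" "s < 1"
      have "\<forall>i. (x + s *\<^sub>R e) $ i \<noteq> 0" using s by (auto simp: e_def)
      thus "- (\<Sum>i\<in>{i. P i}. arctan ((3/8) * \<bar>(x + s *\<^sub>R e) $ i\<bar> powr (-1/2)))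
                 + (\<Sum>i\<in>{i. \<not> P i}. arctan ((3/8) * \<bar>(x + s *\<^sub>R e) $ i\<bar> powr (-1/2)))
           = f (x + s *\<^sub>R e)" using fP by simp
    qed simp
    ultimately show ?thesis by (rule Lim_transform_eventually)
  qed
  have fx: "f x = - (\<Sum>i\<in>{i. P i}. A i) + (\<Sum>i\<in>{i. \<not> P i}. A i)"
    by (rule tendsto_unique[OF trivial_limit_at_right_real flim1 flim2])
  have s1: "real (card S) * (pi/2) \<le> (\<Sum>i\<in>{i. P i}. A i)"
  proof -
    have "(\<Sum>i\<in>S. A i) = real (card S) * (pi/2)" by (simp add: S_def A_def)
    moreover have "(\<Sum>i\<in>S. A i) \<le> (\<Sum>i\<in>{i. P i}. A i)"
      by (rule sum_mono2) (auto simp: S_def A_def)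
    ultimately show ?thesis by simp
  qed
  have s2: "(\<Sum>i\<in>{i. \<not> P i}. A i) \<le> (\<Sum>i\<in>-S. arctan (d i))"
  proof -
    have "(\<Sum>i\<in>{i. \<not> P i}. A i) = (\<Sum>i\<in>{i. \<not> P i}. arctan (d i))"
      by (rule sum.cong) (auto simp: A_def d_def nz)
    also have "\<dots> \<le> (\<Sum>i\<in>-S. arctan (d i))"
      by (rule sum_mono2) (auto simp: S_def d_def)
    finally show ?thesis .
  qed
  show "f x \<le> Farctan (H x)" using fx s1 s2 FL by linarith
qed

lemma neg_mv: "(- (M::real^'n^'n)) *v u = - (M *v u)"
  by (simp add: vec_eq_iff matrix_vector_mult_def sum_negf)

lemma Farctan_neg:
  fixes M :: "real^'n^'n"
  assumes sy: "symm M"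
  shows "Farctan (- M) = - Farctan M"
proof -
  obtain E where E: "eigset M E" and cE: "card E = CARD('n)" using spectral[OF sy] by blast
  have E': "eigset (- M) E"
    using E unfolding eigset_def by (auto simp: neg_mv) (metis scaleR_minus_left)
  show ?thesis
    by (simp add: Farctan_eig[OF E cE] Farctan_eig[OF E' cE] neg_mv arctan_minus sum_negf)
qed

lemma idx_mono: "(i::'n::{finite,wellorder}) < j \<Longrightarrow> idx i < idx j"
  unfolding idx_def by (rule psubset_card_mono) auto

lemma idx_inj: "inj (idx :: 'n::{finite,wellorder} \<Rightarrow> nat)"
proof (rule injI)
  fix i j :: 'n assume "idx i = idx j"
  thus "i = j" using idx_mono[of i j] idx_mono[of j i] by (cases i j rule: linorder_cases) auto
qed

lemma idx_lt: "idx (i::'n::{finite,wellorder}) < CARD('n)"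
  unfolding idx_def by (rule psubset_card_mono) auto

lemma idx_range: "range (idx :: 'n::{finite,wellorder} \<Rightarrow> nat) = {..<CARD('n)}"
proof -
  have sub: "range (idx :: 'n \<Rightarrow> nat) \<subseteq> {..<CARD('n)}" using idx_lt by auto
  have "card (range (idx :: 'n \<Rightarrow> nat)) = CARD('n)" using card_image[OF idx_inj] by simp
  thus ?thesis using sub by (intro card_subset_eq) auto
qed

definition ridx :: "'n::{finite,wellorder} \<Rightarrow> 'n" where
  "ridx i = inv idx (CARD('n) - 1 - idx i)"

lemma idx_ridx: "idx (ridx (i::'n::{finite,wellorder})) = CARD('n) - 1 - idx i"
proof -
  have "CARD('n) - 1 - idx i \<in> range (idx :: 'n \<Rightarrow> nat)" unfolding idx_range using idx_lt[of i] by auto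
  thus ?thesis unfolding ridx_def by (simp add: f_inv_into_f)
qed

lemma ridx_ridx: "ridx (ridx (i::'n::{finite,wellorder})) = i"
proof -
  have "idx (ridx (ridx i)) = idx i" using idx_ridx[of "ridx i"] idx_ridx[of i] idx_lt[of i] by simp
  thus ?thesis by (rule injD[OF idx_inj])
qed

lemma exchange_mv: "(exchange *v x) $ i = x $ ridx (i::'n::{finite,wellorder})"
proof -
  have "(exchange *v x) $ i = (\<Sum>j\<in>UNIV. (if idx i + idx j = CARD('n) - 1 then 1 else 0) * x $ j)"
    by (simp add: exchange_def matrix_vector_mult_def)
  also have "\<dots> = (\<Sum>j\<in>UNIV. if j = ridx i then x $ j else 0)"
  proof (rule sum.cong)
    fix j :: 'n assume "j \<in> UNIV"
    have "idx i + idx j = CARD('n) - 1 \<longleftrightarrow> idx j = idx (ridx i)"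
      using idx_ridx[of i] idx_lt[of i] by auto
    also have "\<dots> \<longleftrightarrow> j = ridx i" by (simp add: inj_eq[OF idx_inj])
    finally show "(if idx i + idx j = CARD('n) - 1 then 1 else 0) * x $ j = (if j = ridx i then x $ j else 0)"
      by simp
  qed simp
  also have "\<dots> = x $ ridx i" by simp
  finally show ?thesis .
qed

lemma wP_split: "wP P y = 1/4 - (\<Sum>i\<in>{i. P i}. \<bar>y $ i\<bar>) + (\<Sum>i\<in>{i. \<not> P i}. (1/2) * \<bar>y $ i\<bar> powr (3/2))"
proof -
  have "(\<Sum>j\<in>UNIV. Gc (P j) (y $ j)) = (\<Sum>j\<in>UNIV \<inter> {j. P j}. - \<bar>y $ j\<bar>) + (\<Sum>j\<in>UNIV \<inter> - {j. P j}. (1/2) * \<bar>y $ j\<bar> powr (3/2))"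
    unfolding Gc_def by (rule sum.If_cases) simp
  thus ?thesis by (simp add: wP_def sum_negf Compl_eq)
qed

lemma vfun_wP: "vfun k = wP (\<lambda>i. idx i < k)"
proof
  fix y
  have s: "{i. k \<le> idx i} = {i. \<not> idx i < k}" by auto
  show "vfun k y = wP (\<lambda>i. idx i < k) y" by (simp only: vfun_def wP_split s)
qed

lemma ufun_wP:
  fixes x :: "real^'n::{finite,wellorder}"
  assumes k: "k \<le> CARD('n)"
  shows "- ufun k x = wP (\<lambda>i. k \<le> idx i) x"
proof -
  have "- ufun k x = wP (\<lambda>i. idx i < CARD('n) - k) (exchange *v x)"
    by (simp add: ufun_def vfun_wP)
  also have "\<dots> = 1/4 + (\<Sum>j\<in>UNIV. Gc (idx j < CARD('n) - k) (x $ ridx j))"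
    by (simp add: wP_def exchange_mv)
  also have "(\<Sum>j\<in>UNIV. Gc (idx j < CARD('n) - k) (x $ ridx j)) = (\<Sum>i\<in>UNIV. Gc (idx (ridx i) < CARD('n) - k) (x $ i))"
  proof -
    have bij: "bij_betw ridx (UNIV :: 'n set) UNIV"
      by (rule bij_betwI[of _ _ _ ridx]) (auto simp: ridx_ridx)
    show ?thesis
      using sum.reindex_bij_betw[OF bij, of "\<lambda>i. Gc (idx (ridx i) < CARD('n) - k) (x $ i)"]
      by (simp add: ridx_ridx)
  qed
  also have "\<dots> = (\<Sum>i\<in>UNIV. Gc (k \<le> idx i) (x $ i))"
  proof (rule sum.cong)
    fix i :: 'n assume "i \<in> UNIV"
    have "idx (ridx i) < CARD('n) - k \<longleftrightarrow> k \<le> idx i" using idx_ridx[of i] idx_lt[of i] k by auto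
    thus "Gc (idx (ridx i) < CARD('n) - k) (x $ i) = Gc (k \<le> idx i) (x $ i)" by simp
  qed simp
  finally show ?thesis by (simp add: wP_def)
qed

theorem mainTheorem1:
  fixes k :: nat and f :: "real^'n::{finite,wellorder} \<Rightarrow> real"
  assumes "k \<le> CARD('n)"
    and "continuous_on UNIV f"
    and "\<And>x. (\<forall>i. x $ i \<noteq> 0) \<Longrightarrow>
           f x = - (\<Sum>i\<in>{i. idx i < k}. arctan ((3/8) * \<bar>x $ i\<bar> powr (-1/2)))
                 + (\<Sum>i\<in>{i. k \<le> idx i}. arctan ((3/8) * \<bar>x $ i\<bar> powr (-1/2)))"
  shows "viscosity_subsolution Farctan f UNIV (vfun k)
       \<and> viscosity_supersolution Farctan f UNIV (ufun k)"
proof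
  have s1: "{i. k \<le> idx i} = {i. \<not> idx i < k}" by auto
  show "viscosity_subsolution Farctan f UNIV (vfun k)"
    unfolding vfun_wP
  proof (rule sub_general[OF assms(2)])
    fix x :: "(real, 'n) vec" assume "\<forall>i. x $ i \<noteq> 0"
    from assms(3)[OF this]
    show "f x = - (\<Sum>i\<in>{i. idx i < k}. arctan ((3/8) * \<bar>x $ i\<bar> powr (-1/2)))
                 + (\<Sum>i\<in>{i. \<not> idx i < k}. arctan ((3/8) * \<bar>x $ i\<bar> powr (-1/2)))"
      unfolding s1 .
  qed
  have sub': "viscosity_subsolution Farctan (\<lambda>x. - f x) UNIV (wP (\<lambda>i. k \<le> idx i))"
  proof (rule sub_general)
    show "continuous_on UNIV (\<lambda>x. - f x)" using assms(2) by (intro continuous_intros)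
    fix x :: "(real, 'n) vec" assume nz: "\<forall>i. x $ i \<noteq> 0"
    have s2: "{i. \<not> k \<le> idx i} = {i. idx i < k}" by auto
    show "- f x = - (\<Sum>i\<in>{i. k \<le> idx i}. arctan ((3/8) * \<bar>x $ i\<bar> powr (-1/2)))
                 + (\<Sum>i\<in>{i. \<not> k \<le> idx i}. arctan ((3/8) * \<bar>x $ i\<bar> powr (-1/2)))"
      unfolding s2 assms(3)[OF nz] by simp
  qed
  show "viscosity_supersolution Farctan f UNIV (ufun k)"
    unfolding viscosity_supersolution_def
  proof (intro ballI allI impI)
    fix x :: "(real, 'n) vec" and \<psi> H
    assume A: "C2_with_hessian \<psi> H \<and> eventually (\<lambda>y. \<psi> y \<le> ufun k y) (nhds x) \<and> \<psi> x = ufun k x"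
    obtain g where d1: "\<And>y. (\<psi> has_derivative (\<lambda>h. g y \<bullet> h)) (at y)"
      and d2: "\<And>y. (g has_derivative (\<lambda>h. H y *v h)) (at y)" and cH: "continuous_on UNIV H"
      using A unfolding C2_with_hessian_def by blast
    have sy: "symm (H x)"
      unfolding symm_def by (simp add: vec_eq_iff transpose_def hess_symm[OF d1 d2 cH])
    have C2: "C2_with_hessian (\<lambda>y. - \<psi> y) (\<lambda>y. - H y)"
      unfolding C2_with_hessian_def
    proof (intro exI[of _ "\<lambda>y. - g y"] conjI allI)
      fix y
      show "((\<lambda>y. - \<psi> y) has_derivative (\<lambda>h. - g y \<bullet> h)) (at y)"
        using has_derivative_minus[OF d1[of y]] by simp
      show "((\<lambda>y. - g y) has_derivative (\<lambda>h. (- H y) *v h)) (at y)"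
        using has_derivative_minus[OF d2[of y]] by (simp add: neg_mv)
    next
      show "continuous_on UNIV (\<lambda>y. - H y)" using cH by (intro continuous_intros)
    qed
    have ev: "eventually (\<lambda>y. - \<psi> y \<ge> wP (\<lambda>i. k \<le> idx i) y) (nhds x)"
    proof -
      have "eventually (\<lambda>y. \<psi> y \<le> ufun k y) (nhds x)" using A by blast
      thus ?thesis
      proof (rule eventually_mono)
        fix y assume "\<psi> y \<le> ufun k y"
        thus "- \<psi> y \<ge> wP (\<lambda>i. k \<le> idx i) y" using ufun_wP[OF assms(1), of y] by linarith
      qed
    qed
    have eq: "- \<psi> x = wP (\<lambda>i. k \<le> idx i) x" using A ufun_wP[OF assms(1)] by simp
    have "- f x \<le> Farctan (- H x)"
      using sub' C2 ev eq unfolding viscosity_subsolution_def by blast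
    thus "Farctan (H x) \<le> f x" using Farctan_neg[OF sy] by simp
  qed
qed

end
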